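(* Let $\varphi(z,x,y)$ satisfy conditions (C1), (C3), (C4), (C5) stated in the context. Assume that $\varphi(z,x,y)$ is twice continuously differentiable in $z$ for almost all $(x,y)\in\Omega\times\Omega$ and satisfies \[ \varphi''(z,x,y)\geq c_7z^{-2}\varphi(z,x,y),\qquad z>0, \] with a constant $c_7$ independent of $z,x,y$. Then $\varphi$ is uniformly convex in the following sense: for every $\varepsilon>0$ there exists $\delta\in(0,1)$ such that \[ \varphi\left(\frac{s+t}{2},x,y\right)\leq (1-\delta)\frac{\varphi(s,x,y)+\varphi(t,x,y)}{2} \] for almost all $(x,y)\in\Omega\times\Omega$ and all $s>0$, $t>0$ with $|s-t|\geq\varepsilon\max\{s,t\}$.
   Context: $\Omega\subseteq\mathbb{R}^d$ is a domain and $\varphi(z,x,y)\ge0$ on $\mathbb{R}_+\times\Omega\times\Omega$. Conditions: (C1) for each $u\in L_{1,loc}(\Omega)$ the function $\varphi(|u(x)-u(y)|,x,y)$ is measurable on $\Omega\times\Omega$; (C3) there are constants $1<p_-\le p_+$ and $\beta\ge1$ such that $r(t)=\varphi(t,x,y)/t^{p_-}$ satisfies $r(s)\le\beta r(t)$ and $r(t)=\varphi(t,x,y)/t^{p_+}$ satisfies $\beta r(s)\ge r(t)$ for all $0\le s\le t$, a.a. $(x,y)$; (C4) $c_1^{-1}\le\varphi(1,x,y)\le c_1$, $\varphi(0,x,y)=0$, $\varphi(t,x,y)>0$ for $t>0$, a.a. $(x,y)$; (C5) $\varphi$ is differentiable in $t>0$ and $0<t\varphi'(t,x,y)\le c_2\varphi(t,x,y)$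 with a constant $c_2>1$. Derivatives $\varphi',\varphi''$ are with respect to the first variable. *)

theory Defs
  imports "HOL-Analysis.Analysis"
begin

definition L1_loc :: "'a::euclidean_space set \<Rightarrow> ('a \<Rightarrow> real) set" where
  "L1_loc \<Omega> = {u. u \<in> borel_measurable (lebesgue_on \<Omega>) \<and>
      (\<forall>K. compact K \<and> K \<subseteq> \<Omega> \<longrightarrow> set_integrable lebesgue K u)}"

definition cond_C1 :: "'a::euclidean_space set \<Rightarrow> (real \<Rightarrow> 'a \<Rightarrow> 'a \<Rightarrow> real) \<Rightarrow> bool" where
  "cond_C1 \<Omega> \<phi> \<longleftrightarrow> (\<forall>u \<in> L1_loc \<Omega>.
      (\<lambda>(x,y). \<phi> \<bar>u x - u y\<bar> x y) \<in> borel_measurable (lebesgue_on (\<Omega> \<times> \<Omega>)))"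

definition cond_C3 :: "'a::euclidean_space set \<Rightarrow> (real \<Rightarrow> 'a \<Rightarrow> 'a \<Rightarrow> real)
    \<Rightarrow> real \<Rightarrow> real \<Rightarrow> real \<Rightarrow> bool" where
  "cond_C3 \<Omega> \<phi> pm pp \<beta> \<longleftrightarrow> 1 < pm \<and> pm \<le> pp \<and> 1 \<le> \<beta> \<and>
     (AE (x,y) in lebesgue_on (\<Omega> \<times> \<Omega>). \<forall>s t. 0 < s \<and> s \<le> t \<longrightarrow>
        \<phi> s x y / s powr pm \<le> \<beta> * (\<phi> t x y / t powr pm) \<and>
        \<phi> t x y / t powr pp \<le> \<beta> * (\<phi> s x y / s powr pp))"

definition cond_C4 :: "'a::euclidean_space set \<Rightarrow> (real \<Rightarrow> 'a \<Rightarrow> 'a \<Rightarrow> real) \<Rightarrow> real \<Rightarrow> bool" where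
  "cond_C4 \<Omega> \<phi> c1 \<longleftrightarrow>
     (AE (x,y) in lebesgue_on (\<Omega> \<times> \<Omega>). inverse c1 \<le> \<phi> 1 x y \<and> \<phi> 1 x y \<le> c1 \<and>
        \<phi> 0 x y = 0 \<and> (\<forall>t>0. \<phi> t x y > 0))"

definition cond_C5 :: "'a::euclidean_space set \<Rightarrow> (real \<Rightarrow> 'a \<Rightarrow> 'a \<Rightarrow> real) \<Rightarrow> real \<Rightarrow> bool" where
  "cond_C5 \<Omega> \<phi> c2 \<longleftrightarrow> 1 < c2 \<and>
     (AE (x,y) in lebesgue_on (\<Omega> \<times> \<Omega>). \<forall>t>0.
        (\<lambda>z. \<phi> z x y) differentiable (at t) \<and>
        0 < t * deriv (\<lambda>z. \<phi> z x y) t \<and>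
        t * deriv (\<lambda>z. \<phi> z x y) t \<le> c2 * \<phi> t x y)"

end

theory Submission
  imports Defs
begin

lemma right_taylor:
  fixes f f1 f2 :: "real \<Rightarrow> real"
  assumes ab: "a \<le> b"
    and d: "\<And>u. a \<le> u \<Longrightarrow> u \<le> b \<Longrightarrow> DERIV f u :> f1 u \<and> DERIV f1 u :> f2 u \<and> f2 u \<ge> c"
  shows "f b \<ge> f a + f1 a * (b - a) + c * (b - a)^2 / 2"
proof (cases "a = b")
  case True then show ?thesis by simp
next
  case False
  with ab have ab': "a < b" by simp
  have g1: "f1 u \<ge> f1 a + c * (u - a)" if "a \<le> u" "u \<le> b" for u
  proof (cases "a = u")
    case True then show ?thesis by simp
  next
    case False
    with that have au: "a < u" by simp
    have "\<And>x. a \<le> x \<Longrightarrow> x \<le> u \<Longrightarrow> DERIV (\<lambda>v. f1 v - c * v) x :> f2 x - c"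
      using d that by (auto intro!: derivative_eq_intros)
    from MVT2[OF au this] obtain z where z: "a < z" "z < u"
      "f1 u - c * u - (f1 a - c * a) = (u - a) * (f2 z - c)" by blast
    have "f2 z \<ge> c" using d z that by auto
    then have "(u - a) * (f2 z - c) \<ge> 0" using au by simp
    then show ?thesis using z(3) by (simp add: algebra_simps)
  qed
  have "\<And>x. a \<le> x \<Longrightarrow> x \<le> b \<Longrightarrow> DERIV (\<lambda>v. f v - f1 a * v - c * (v - a)^2 / 2) x :> f1 x - f1 a - c * (x - a)"
    using d by (auto intro!: derivative_eq_intros simp: field_simps)
  from MVT2[OF ab' this] obtain z where z: "a < z" "z < b"
    "f b - f1 a * b - c * (b - a)^2 / 2 - (f a - f1 a * a - c * (a - a)^2 / 2) = (b - a) * (f1 z - f1 a - c * (z - a))" by blast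
  have "f1 z - f1 a - c * (z - a) \<ge> 0" using g1[of z] z by simp
  then have "(b - a) * (f1 z - f1 a - c * (z - a)) \<ge> 0" using ab by simp
  then show ?thesis using z(3) by (simp add: algebra_simps)
qed

lemma left_taylor:
  fixes f f1 f2 :: "real \<Rightarrow> real"
  assumes ab: "a \<le> b"
    and d: "\<And>u. a \<le> u \<Longrightarrow> u \<le> b \<Longrightarrow> DERIV f u :> f1 u \<and> DERIV f1 u :> f2 u \<and> f2 u \<ge> 0"
  shows "f a \<ge> f b - f1 b * (b - a)"
proof (cases "a = b")
  case True then show ?thesis by simp
next
  case False
  with ab have ab': "a < b" by simp
  have g1: "f1 u \<le> f1 b" if "a \<le> u" "u \<le> b" for u
  proof (cases "u = b")
    case True then show ?thesis by simp
  next
    case False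
    with that have au: "u < b" by simp
    have "\<And>x. u \<le> x \<Longrightarrow> x \<le> b \<Longrightarrow> DERIV f1 x :> f2 x"
      using d that by auto
    from MVT2[OF au this] obtain z where z: "u < z" "z < b"
      "f1 b - f1 u = (b - u) * f2 z" by blast
    have "f2 z \<ge> 0" using d z that by auto
    then have "(b - u) * f2 z \<ge> 0" using au by simp
    then show ?thesis using z(3) by simp
  qed
  have "\<And>x. a \<le> x \<Longrightarrow> x \<le> b \<Longrightarrow> DERIV f x :> f1 x"
    using d by auto
  from MVT2[OF ab' this] obtain z where z: "a < z" "z < b"
    "f b - f a = (b - a) * f1 z" by blast
  have "(b - a) * f1 z \<le> (b - a) * f1 b" using g1[of z] z ab by (simp add: mult_left_mono)
  then show ?thesis using z(3) by (simp add: algebra_simps)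
qed

lemma pointwise_ordered:
  fixes f :: "real \<Rightarrow> real"
  assumes pos: "\<And>z. z > 0 \<Longrightarrow> f z > 0"
    and d1: "\<And>z. z > 0 \<Longrightarrow> f differentiable (at z) \<and> deriv f differentiable (at z)"
    and dpos: "\<And>z. z > 0 \<Longrightarrow> deriv f z > 0"
    and d2: "\<And>z. z > 0 \<Longrightarrow> deriv (deriv f) z \<ge> c7 * z powr (-2) * f z"
    and c7: "c7 > 0" and e: "\<epsilon> > 0"
    and st: "0 < s" "s \<le> t" "t - s \<ge> \<epsilon> * t"
  shows "f ((s + t) / 2) * (1 + c7 * \<epsilon>^2 / 16) \<le> (f s + f t) / 2"
proof -
  define m where "m = (s + t) / 2"
  define h where "h = (t - s) / 2"
  have t0: "t > 0" using st by simp
  have hm: "m = s + h" "t = m + h" and h0: "h \<ge> 0" using st unfolding m_def h_def by (auto simp: field_simps)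
  have D: "DERIV f u :> deriv f u \<and> DERIV (deriv f) u :> deriv (deriv f) u" if "u > 0" for u
    using d1[OF that] by (simp add: DERIV_deriv_iff_real_differentiable)
  have fm: "f m > 0" using pos st unfolding m_def by simp
  define a where "a = c7 * t powr (-2) * f m"
  have mono: "f m \<le> f u" if "m \<le> u" for u
  proof (cases "m = u")
    case False
    then have "m < u" using that by simp
    then show ?thesis
      using DERIV_pos_imp_increasing[of m u f] D dpos st hm h0
      by (smt (verit, best))
  qed simp
  have R: "f t \<ge> f m + deriv f m * (t - m) + a * (t - m)^2 / 2"
  proof (rule right_taylor)
    show "m \<le> t" using hm h0 by simp
    fix u assume u: "m \<le> u" "u \<le> t"
    have u0: "u > 0" using u hm h0 st by simp
    have "t powr (-2) \<le> u powr (-2)"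
      using u u0 by (intro powr_mono2') auto
    then have "a \<le> c7 * u powr (-2) * f u"
      unfolding a_def using mono[OF u(1)] fm c7
      by (intro mult_mono) (auto intro: mult_left_mono)
    then show "DERIV f u :> deriv f u \<and> DERIV (deriv f) u :> deriv (deriv f) u \<and> a \<le> deriv (deriv f) u"
      using D[OF u0] d2[OF u0] by simp
  qed
  have L: "f s \<ge> f m - deriv f m * (m - s)"
  proof (rule left_taylor)
    show "s \<le> m" using hm h0 by simp
    fix u assume u: "s \<le> u" "u \<le> m"
    have u0: "u > 0" using u st by simp
    have "0 \<le> c7 * u powr (-2) * f u" using c7 pos[OF u0] by simp
    then show "DERIV f u :> deriv f u \<and> DERIV (deriv f) u :> deriv (deriv f) u \<and> 0 \<le> deriv (deriv f) u"
      using D[OF u0] d2[OF u0] by linarith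
  qed
  have sum: "f s + f t \<ge> 2 * f m + a * h^2 / 2"
    using R L hm by (simp add: algebra_simps)
  have tp: "t powr (-2) = 1 / t^2" using t0 by (simp add: powr_minus powr_realpow divide_inverse)
  have heps: "h \<ge> \<epsilon> * t / 2" using st unfolding h_def by simp
  have "(\<epsilon> * t / 2)^2 \<le> h^2" using heps e t0 by (intro power_mono) auto
  then have "\<epsilon>^2 / 4 \<le> h^2 / t^2" using t0 by (simp add: field_simps power_mult_distrib)
  then have "c7 * f m * (\<epsilon>^2 / 4) \<le> c7 * f m * (h^2 / t^2)"
    using c7 fm by (intro mult_left_mono) auto
  moreover have "a * h^2 = c7 * f m * (h^2 / t^2)" unfolding a_def tp by simp
  ultimately have "a * h^2 \<ge> c7 * f m * \<epsilon>^2 / 4" by simp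
  with sum show ?thesis unfolding m_def[symmetric] by (simp add: algebra_simps)
qed

theorem lemma2p1:
  fixes \<Omega> :: "'a::euclidean_space set"
    and \<phi> :: "real \<Rightarrow> 'a \<Rightarrow> 'a \<Rightarrow> real"
    and pm pp \<beta> c1 c2 c7 :: real
  assumes "open \<Omega>" and "connected \<Omega>" and "\<Omega> \<noteq> {}"
    and "cond_C1 \<Omega> \<phi>"
    and "cond_C3 \<Omega> \<phi> pm pp \<beta>"
    and "cond_C4 \<Omega> \<phi> c1"
    and "cond_C5 \<Omega> \<phi> c2"
    and "c7 > 0"
    and "AE (x,y) in lebesgue_on (\<Omega> \<times> \<Omega>).
           (\<forall>z>0. (\<lambda>w. \<phi> w x y) differentiable (at z)
                 \<and> deriv (\<lambda>w. \<phi> w x y) differentiable (at z)) \<and>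
           continuous_on {0<..} (deriv (deriv (\<lambda>w. \<phi> w x y))) \<and>
           (\<forall>z>0. deriv (deriv (\<lambda>w. \<phi> w x y)) z \<ge> c7 * z powr (-2) * \<phi> z x y)"
  shows "\<forall>\<epsilon>>0. \<exists>\<delta>. 0 < \<delta> \<and> \<delta> < 1 \<and>
           (AE (x,y) in lebesgue_on (\<Omega> \<times> \<Omega>). \<forall>s t. 0 < s \<and> 0 < t \<and>
              \<bar>s - t\<bar> \<ge> \<epsilon> * max s t \<longrightarrow>
              \<phi> ((s + t) / 2) x y \<le> (1 - \<delta>) * ((\<phi> s x y + \<phi> t x y) / 2))"
proof (intro allI impI)
  fix \<epsilon> :: real assume e: "\<epsilon> > 0"
  define k where "k = c7 * \<epsilon>^2 / 16"
  have k0: "k > 0" using e assms(8) unfolding k_def by simp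
  define \<delta> where "\<delta> = k / (1 + k)"
  have d1: "1 - \<delta> = 1 / (1 + k)" using k0 unfolding \<delta>_def by (simp add: field_simps)
  have "0 < \<delta> \<and> \<delta> < 1" using k0 unfolding \<delta>_def by (simp add: field_simps)
  moreover
  have A4: "AE (x,y) in lebesgue_on (\<Omega> \<times> \<Omega>). (\<forall>t>0. \<phi> t x y > 0)"
    using assms(6) unfolding cond_C4_def by (auto elim!: eventually_mono)
  have A5: "AE (x,y) in lebesgue_on (\<Omega> \<times> \<Omega>). \<forall>t>0. 0 < t * deriv (\<lambda>z. \<phi> z x y) t"
    using assms(7) unfolding cond_C5_def by (auto elim!: eventually_mono)
  have "AE (x,y) in lebesgue_on (\<Omega> \<times> \<Omega>). \<forall>s t. 0 < s \<and> 0 < t \<and>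
              \<bar>s - t\<bar> \<ge> \<epsilon> * max s t \<longrightarrow>
              \<phi> ((s + t) / 2) x y \<le> (1 - \<delta>) * ((\<phi> s x y + \<phi> t x y) / 2)"
    using A4 A5 assms(9)
  proof eventually_elim
    case (elim p)
    obtain x y where p: "p = (x, y)" by (cases p)
    define f where "f = (\<lambda>w. \<phi> w x y)"
    have pos: "\<And>z. z > 0 \<Longrightarrow> f z > 0" and dpos0: "\<And>z. z > 0 \<Longrightarrow> 0 < z * deriv f z"
      and dd: "\<And>z. z > 0 \<Longrightarrow> f differentiable (at z) \<and> deriv f differentiable (at z)"
      and d2: "\<And>z. z > 0 \<Longrightarrow> deriv (deriv f) z \<ge> c7 * z powr (-2) * f z"
      using elim unfolding p f_def by auto
    have dpos: "\<And>z. z > 0 \<Longrightarrow> deriv f z > 0"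
      using dpos0 by (simp add: zero_less_mult_iff)
    have key: "f ((s + t) / 2) \<le> (1 - \<delta>) * ((f s + f t) / 2)"
      if "0 < s" "s \<le> t" "t - s \<ge> \<epsilon> * t" for s t
    proof -
      have "f ((s + t) / 2) * (1 + k) \<le> (f s + f t) / 2"
        using pointwise_ordered[OF pos dd dpos d2 assms(8) e that] unfolding k_def by simp
      then show ?thesis unfolding d1 using k0 by (simp add: field_simps)
    qed
    show ?case unfolding p case_prod_conv
    proof (intro allI impI, elim conjE)
      fix s t :: real assume st: "0 < s" "0 < t" "\<bar>s - t\<bar> \<ge> \<epsilon> * max s t"
      show "\<phi> ((s + t) / 2) x y \<le> (1 - \<delta>) * ((\<phi> s x y + \<phi> t x y) / 2)"
      proof (cases "s \<le> t")
        case True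
        then show ?thesis using key[of s t] st unfolding f_def by (simp add: max_def)
      next
        case False
        then have "f ((t + s) / 2) \<le> (1 - \<delta>) * ((f t + f s) / 2)"
          using key[of t s] st by (simp add: max_def)
        then show ?thesis unfolding f_def by (simp add: add.commute)
      qed
    qed
  qed
  ultimately show "\<exists>\<delta>. 0 < \<delta> \<and> \<delta> < 1 \<and>
           (AE (x,y) in lebesgue_on (\<Omega> \<times> \<Omega>). \<forall>s t. 0 < s \<and> 0 < t \<and>
              \<bar>s - t\<bar> \<ge> \<epsilon> * max s t \<longrightarrow>
              \<phi> ((s + t) / 2) x y \<le> (1 - \<delta>) * ((\<phi> s x y + \<phi> t x y) / 2))" by blast
qed

end
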